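(* Let $\mathcal{H}$ be a complex Hilbert space, $A\in\mathcal{B}(\mathcal{H})$ positive and $S\in\mathcal{B}_A(\mathcal{H})$. Then $$d\omega_A^2(S)+2\|S\|_A^2\|\Re_A(S)\|_A\ge\max\left\{\omega_A^2\left(S+S^{\sharp_A}S\right),\ \omega_A^2\left(S-S^{\sharp_A}S\right)\right\}.$$
   Context: $\mathcal{B}(\mathcal{H})$ denotes the bounded linear operators on $\mathcal{H}$. For positive $A$, $\langle x,z\rangle_A=\langle Ax,z\rangle$ and $\|z\|_A=\|A^{1/2}z\|$. $\mathcal{B}_A(\mathcal{H})$ is the set of $S\in\mathcal{B}(\mathcal{H})$ for which some $R\in\mathcal{B}(\mathcal{H})$ satisfies $AR=S^*A$; for such $S$, $S^{\sharp_A}=A^{\dagger}S^*A$ with $A^\dagger$ the Moore–Penrose inverse of $A$. $\Re_A(S)=\frac{S+S^{\sharp_A}}{2}$. For operators $T$ bounded with respect to $\|\cdot\|_A$: $\|T\|_A=\sup_{\|z\|_A=1}\|Tz\|_A$, $\omega_A(T)=\sup_{\|z\|_A=1}|\langle Tz,z\rangle_A|$, and $d\omega_A(T)=\sup_{\|z\|_A=1}(|\langle Tz,z\rangle_A|^2+\|Tz\|_A^4)^{1/2}$. *)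

theory Defs
  imports "HOL-Analysis.Analysis"
begin

text \<open>A complex Hilbert space is modelled as a real Hilbert space (type class
  real_inner + complete_space) equipped with an orthogonal complex structure J
  (multiplication by the imaginary unit).\<close>

definition complex_structure :: "('a::real_inner \<Rightarrow> 'a) \<Rightarrow> bool" where
  "complex_structure J \<longleftrightarrow> bounded_linear J \<and> (\<forall>x. J (J x) = - x)
     \<and> (\<forall>x y. J x \<bullet> J y = x \<bullet> y)"

definition cinner :: "('a::real_inner \<Rightarrow> 'a) \<Rightarrow> 'a \<Rightarrow> 'a \<Rightarrow> complex" where
  "cinner J x y = Complex (x \<bullet> y) (x \<bullet> J y)"

definition cbounded :: "('a::real_inner \<Rightarrow> 'a) \<Rightarrow> ('a \<Rightarrow> 'a) \<Rightarrow> bool" where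
  "cbounded J T \<longleftrightarrow> bounded_linear T \<and> (\<forall>x. T (J x) = J (T x))"

definition cadj :: "('a::real_inner \<Rightarrow> 'a) \<Rightarrow> ('a \<Rightarrow> 'a) \<Rightarrow> 'a \<Rightarrow> 'a" where
  "cadj J T = (\<lambda>y. THE z. \<forall>x. cinner J (T x) y = cinner J x z)"

definition cpositive :: "('a::real_inner \<Rightarrow> 'a) \<Rightarrow> ('a \<Rightarrow> 'a) \<Rightarrow> bool" where
  "cpositive J A \<longleftrightarrow> cbounded J A \<and>
     (\<forall>x. Im (cinner J (A x) x) = 0 \<and> Re (cinner J (A x) x) \<ge> 0)"

definition BA :: "('a::real_inner \<Rightarrow> 'a) \<Rightarrow> ('a \<Rightarrow> 'a) \<Rightarrow> ('a \<Rightarrow> 'a) set" where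
  "BA J A = {S. cbounded J S \<and> (\<exists>R. cbounded J R \<and> (\<forall>x. A (R x) = cadj J S (A x)))}"

text \<open>Moore--Penrose inverse of A on its domain R(A) + R(A)^perp:
  A^dagger y is the unique x in N(A)^perp with y - A x orthogonal to R(A)
  (i.e. A x is the orthogonal projection of y onto the closure of R(A)).\<close>
definition mp_inv :: "('a::real_inner \<Rightarrow> 'a) \<Rightarrow> ('a \<Rightarrow> 'a) \<Rightarrow> 'a \<Rightarrow> 'a" where
  "mp_inv J A y = (THE x. (\<forall>z. A z = 0 \<longrightarrow> cinner J x z = 0)
                        \<and> (\<forall>z. cinner J (y - A x) (A z) = 0))"

definition sharpA :: "('a::real_inner \<Rightarrow> 'a) \<Rightarrow> ('a \<Rightarrow> 'a) \<Rightarrow> ('a \<Rightarrow> 'a) \<Rightarrow> 'a \<Rightarrow> 'a" where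
  "sharpA J A S = (\<lambda>z. mp_inv J A (cadj J S (A z)))"

definition ReA :: "('a::real_inner \<Rightarrow> 'a) \<Rightarrow> ('a \<Rightarrow> 'a) \<Rightarrow> ('a \<Rightarrow> 'a) \<Rightarrow> 'a \<Rightarrow> 'a" where
  "ReA J A S = (\<lambda>z. (1/2) *\<^sub>R (S z + sharpA J A S z))"

definition ainner :: "('a::real_inner \<Rightarrow> 'a) \<Rightarrow> ('a \<Rightarrow> 'a) \<Rightarrow> 'a \<Rightarrow> 'a \<Rightarrow> complex" where
  "ainner J A x z = cinner J (A x) z"

definition anorm :: "('a::real_inner \<Rightarrow> 'a) \<Rightarrow> ('a \<Rightarrow> 'a) \<Rightarrow> 'a \<Rightarrow> real" where
  "anorm J A z = sqrt (Re (ainner J A z z))"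

text \<open>Suprema over the A-unit sphere; 0 is inserted so that the (degenerate)
  empty supremum is 0 -- all quantities are nonnegative, so this changes nothing otherwise.\<close>
definition opnormA :: "('a::real_inner \<Rightarrow> 'a) \<Rightarrow> ('a \<Rightarrow> 'a) \<Rightarrow> ('a \<Rightarrow> 'a) \<Rightarrow> real" where
  "opnormA J A T = Sup (insert 0 ((\<lambda>z. anorm J A (T z)) ` {z. anorm J A z = 1}))"

definition omegaA :: "('a::real_inner \<Rightarrow> 'a) \<Rightarrow> ('a \<Rightarrow> 'a) \<Rightarrow> ('a \<Rightarrow> 'a) \<Rightarrow> real" where
  "omegaA J A T = Sup (insert 0 ((\<lambda>z. cmod (ainner J A (T z) z)) ` {z. anorm J A z = 1}))"

definition domegaA :: "('a::real_inner \<Rightarrow> 'a) \<Rightarrow> ('a \<Rightarrow> 'a) \<Rightarrow> ('a \<Rightarrow> 'a) \<Rightarrow> real" where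
  "domegaA J A T = Sup (insert 0 ((\<lambda>z. sqrt ((cmod (ainner J A (T z) z))\<^sup>2 + (anorm J A (T z))^4))
                          ` {z. anorm J A z = 1}))"

end

theory Submission
  imports Defs
begin

lemma parallelo:
  fixes u v :: "'a::real_inner"
  shows "(norm (u - v))\<^sup>2 = 2 * (norm u)\<^sup>2 + 2 * (norm v)\<^sup>2 - (norm (u + v))\<^sup>2"
  by (simp add: power2_norm_eq_inner inner_add inner_diff inner_commute)

lemma proj_exists:
  fixes M :: "'a::{real_inner,complete_space} set"
  assumes sub: "subspace M" and cl: "closed M"
  shows "\<exists>m\<in>M. \<forall>y\<in>M. (x - m) \<bullet> y = 0"
proof -
  define d where "d = Inf ((\<lambda>m. (norm (x - m))\<^sup>2) ` M)"
  have M0: "0 \<in> M" using sub by (simp add: subspace_0)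
  have bdd: "bdd_below ((\<lambda>m. (norm (x - m))\<^sup>2) ` M)"
    by (rule bdd_belowI[of _ 0]) auto
  have low: "d \<le> (norm (x - m))\<^sup>2" if "m \<in> M" for m
    unfolding d_def using bdd that by (auto intro: cInf_lower)
  have "\<exists>m\<in>M. (norm (x - m))\<^sup>2 < d + 1 / (real n + 1)" for n
  proof -
    have "d < d + 1 / (real n + 1)" by simp
    then show ?thesis unfolding d_def
      using cInf_lessD[of "(\<lambda>m. (norm (x - m))\<^sup>2) ` M"] M0 by fastforce
  qed
  then obtain f where f: "\<And>n. f n \<in> M \<and> (norm (x - f n))\<^sup>2 < d + 1 / (real n + 1)"
    by metis
  have key: "(norm (f i - f j))\<^sup>2 \<le> 2 / (real i + 1) + 2 / (real j + 1)" for i j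
  proof -
    have mid: "(1/2) *\<^sub>R (f i + f j) \<in> M" using f sub
      by (simp add: subspace_add subspace_scale)
    have "(norm ((x - f j) - (x - f i)))\<^sup>2 = 2 * (norm (x - f j))\<^sup>2 + 2 * (norm (x - f i))\<^sup>2
          - (norm ((x - f j) + (x - f i)))\<^sup>2" by (rule parallelo)
    moreover have "(x - f j) + (x - f i) = 2 *\<^sub>R (x - (1/2) *\<^sub>R (f i + f j))"
      by (simp add: algebra_simps scaleR_2)
    moreover have "(norm (2 *\<^sub>R (x - (1/2) *\<^sub>R (f i + f j))))\<^sup>2 = 4 * (norm (x - (1/2) *\<^sub>R (f i + f j)))\<^sup>2"
      by (simp add: power2_eq_square)
    moreover have "(x - f j) - (x - f i) = f i - f j" by simp
    ultimately have "(norm (f i - f j))\<^sup>2 = 2 * (norm (x - f j))\<^sup>2 + 2 * (norm (x - f i))\<^sup>2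
          - 4 * (norm (x - (1/2) *\<^sub>R (f i + f j)))\<^sup>2" by simp
    moreover have "d \<le> (norm (x - (1/2) *\<^sub>R (f i + f j)))\<^sup>2" using low mid by blast
    ultimately show ?thesis using f[of i] f[of j] by linarith
  qed
  have "Cauchy f"
  proof (rule metric_CauchyI)
    fix e :: real assume e: "e > 0"
    obtain N :: nat where N: "4 / (e\<^sup>2) < real N + 1"
      using reals_Archimedean2[of "4 / e\<^sup>2"] by (metis add.commute add_strict_increasing zero_less_one less_eq_real_def)
    have N2: "4 / (real N + 1) < e\<^sup>2" using N e
      by (smt (verit) divide_less_eq mult.commute of_nat_0_le_iff zero_less_power)
    show "\<exists>M. \<forall>m\<ge>M. \<forall>n\<ge>M. dist (f m) (f n) < e"
    proof (intro exI allI impI)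
      fix m n assume mn: "N \<le> m" "N \<le> n"
      have a: "2 / (real m + 1) \<le> 2 / (real N + 1)" using mn by (simp add: frac_le)
      have b: "2 / (real n + 1) \<le> 2 / (real N + 1)" using mn by (simp add: frac_le)
      have "(norm (f m - f n))\<^sup>2 < e\<^sup>2" using key[of m n] a b N2 by linarith
      then have "norm (f m - f n) < e" using e by (smt (verit) power_mono norm_ge_zero)
      then show "dist (f m) (f n) < e" by (simp add: dist_norm)
    qed
  qed
  then obtain m where lim: "f \<longlonglongrightarrow> m" using Cauchy_convergent_iff convergent_def by blast
  have mM: "m \<in> M" using closed_sequentially[OF cl] f lim by blast
  have t1: "(\<lambda>n. (norm (x - f n))\<^sup>2) \<longlonglongrightarrow> (norm (x - m))\<^sup>2"
    by (intro tendsto_intros lim)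
  have t2: "(\<lambda>n. d + 1 / (real n + 1)) \<longlonglongrightarrow> d + 0"
  proof (intro tendsto_intros)
    show "(\<lambda>n. 1 / (real n + 1)) \<longlonglongrightarrow> 0"
      using LIMSEQ_inverse_real_of_nat by (simp add: inverse_eq_divide add.commute)
  qed
  have "(norm (x - m))\<^sup>2 \<le> d + 0"
    by (rule LIMSEQ_le[OF t1 t2]) (use f less_imp_le in blast)
  then have mind: "(norm (x - m))\<^sup>2 \<le> (norm (x - m'))\<^sup>2" if "m' \<in> M" for m'
    using low[OF that] by linarith
  show ?thesis
  proof (intro bexI[OF _ mM] ballI)
    fix y assume yM: "y \<in> M"
    define w where "w = x - m"
    define c where "c = w \<bullet> y"
    show "(x - m) \<bullet> y = 0"
    proof (cases "y = 0")
      case True then show ?thesis by simp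
    next
      case False
      then have yy: "y \<bullet> y > 0" by simp
      define t where "t = c / (y \<bullet> y)"
      have "m + t *\<^sub>R y \<in> M" using mM yM sub by (simp add: subspace_add subspace_scale)
      then have "(norm w)\<^sup>2 \<le> (norm (w - t *\<^sub>R y))\<^sup>2"
        using mind unfolding w_def by (metis diff_diff_eq)
      also have "\<dots> = w \<bullet> w - 2 * t * c + t * t * (y \<bullet> y)"
        by (simp add: power2_norm_eq_inner inner_diff inner_commute c_def algebra_simps)
      also have "\<dots> = w \<bullet> w - c * c / (y \<bullet> y)"
        using yy by (simp add: t_def field_simps power2_eq_square)
      finally have "c * c / (y \<bullet> y) \<le> 0" by (simp add: power2_norm_eq_inner)
      then have "c * c \<le> 0" using yy by (simp add: divide_le_0_iff)
      then have "c = 0" by (metis mult_eq_0_iff not_square_less_zero order_less_le)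
      then show ?thesis by (simp add: c_def w_def)
    qed
  qed
qed

lemma riesz:
  fixes f :: "'a::{real_inner,complete_space} \<Rightarrow> real"
  assumes bl: "bounded_linear f"
  shows "\<exists>z. \<forall>x. f x = x \<bullet> z"
proof (cases "\<forall>x. f x = 0")
  case True then show ?thesis by (intro exI[of _ 0]) simp
next
  case False
  then obtain x0 where x0: "f x0 \<noteq> 0" by blast
  interpret bounded_linear f by fact
  have sub: "subspace {x. f x = 0}"
    by (simp add: subspace_def add scaleR)
  have cl: "closed {x. f x = 0}"
    by (intro closed_Collect_eq continuous_intros continuous_on_id) (auto intro: continuous_on bl)
  obtain m where m: "f m = 0" "\<forall>y. f y = 0 \<longrightarrow> (x0 - m) \<bullet> y = 0"
    using proj_exists[OF sub cl, of x0] by auto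
  define w where "w = x0 - m"
  have fw: "f w \<noteq> 0" using x0 m by (simp add: w_def diff)
  then have "w \<noteq> 0" by auto
  then have ww: "w \<bullet> w > 0" by simp
  show ?thesis
  proof (intro exI allI)
    fix x
    have "f (x - (f x / f w) *\<^sub>R w) = 0" using fw by (simp add: diff scaleR)
    then have "w \<bullet> (x - (f x / f w) *\<^sub>R w) = 0" using m(2) by (simp add: w_def)
    then have "w \<bullet> x = (f x / f w) * (w \<bullet> w)" by (simp add: inner_diff)
    then show "f x = x \<bullet> ((f w / (w \<bullet> w)) *\<^sub>R w)"
      using fw ww by (simp add: inner_commute field_simps)
  qed
qed

lemma adj_exists:
  fixes T :: "'a::{real_inner,complete_space} \<Rightarrow> 'a"
  assumes "bounded_linear T"
  shows "\<exists>z. \<forall>x. T x \<bullet> y = x \<bullet> z"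
proof -
  have "bounded_linear (\<lambda>x. T x \<bullet> y)"
    using bounded_linear_compose[OF bounded_linear_inner_left assms] by simp
  then show ?thesis using riesz by blast
qed

lemma cs_form:
  fixes A :: "'a::real_inner \<Rightarrow> 'a"
  assumes lin: "linear A" and sym: "\<And>x y. A x \<bullet> y = x \<bullet> A y" and pos: "\<And>x. A x \<bullet> x \<ge> 0"
  shows "(A u \<bullet> v)\<^sup>2 \<le> (A u \<bullet> u) * (A v \<bullet> v)"
proof -
  interpret linear A by fact
  have exp: "A (a *\<^sub>R u + b *\<^sub>R v) \<bullet> (a *\<^sub>R u + b *\<^sub>R v)
      = a * a * (A u \<bullet> u) + 2 * a * b * (A u \<bullet> v) + b * b * (A v \<bullet> v)" for a b
    using sym[of u v] by (simp add: add scale inner_add inner_commute algebra_simps)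
  define p where "p = A u \<bullet> v"
  define uu where "uu = A u \<bullet> u"
  define vv where "vv = A v \<bullet> v"
  have uu0: "uu \<ge> 0" and vv0: "vv \<ge> 0" using pos by (auto simp: uu_def vv_def)
  have q: "0 \<le> a * a * uu + 2 * a * b * p + b * b * vv" for a b
    using pos[of "a *\<^sub>R u + b *\<^sub>R v"] exp[of a b] by (simp add: uu_def vv_def p_def)
  show ?thesis
  proof (cases "vv > 0")
    case True
    have "0 \<le> vv * vv * uu + 2 * vv * (- p) * p + p * p * vv" using q[of vv "-p"] by simp
    then have "0 \<le> vv * (vv * uu - p * p)" by (simp add: algebra_simps)
    then have "p * p \<le> uu * vv" using True by (simp add: zero_le_mult_iff algebra_simps)
    then show ?thesis by (simp add: p_def uu_def vv_def power2_eq_square)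
  next
    case False
    then have v0: "vv = 0" using vv0 by simp
    have "p = 0"
    proof (rule ccontr)
      assume "p \<noteq> 0"
      then have pp: "p * p > 0" by (simp add: zero_less_mult_iff linorder_neq_iff) blast
      define t where "t = (uu + 1) / (p * p)"
      have "0 \<le> 1 * 1 * uu + 2 * 1 * (- t * p) * p + 0" using q[of 1 "- t * p"] v0 by simp
      then have "0 \<le> uu - 2 * t * (p * p)" by (simp add: algebra_simps)
      moreover have "t * (p * p) = uu + 1" using pp unfolding t_def by (metis less_irrefl nonzero_divide_eq_eq)
      ultimately show False using uu0 by linarith
    qed
    then show ?thesis using uu0 v0 by (simp add: p_def uu_def vv_def)
  qed
qed

lemma pow2_bounded_le1:
  fixes r B :: real
  assumes r0: "r \<ge> 0" and b: "\<And>n. r ^ (2 ^ n) \<le> B"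
  shows "r \<le> 1"
proof (rule ccontr)
  assume "\<not> r \<le> 1"
  then have r1: "r > 1" by simp
  obtain n :: nat where n: "B / (r - 1) < real n" using reals_Archimedean2 by blast
  have "1 + real (2 ^ n) * (r - 1) \<le> (1 + (r - 1)) ^ (2 ^ n)"
    by (rule Bernoulli_inequality) (use r1 in simp)
  then have "1 + real (2 ^ n) * (r - 1) \<le> r ^ (2 ^ n)" by simp
  moreover have "real n \<le> real (2 ^ n)"
    by (metis less_imp_le of_nat_le_iff less_exp)
  then have "real n * (r - 1) \<le> real (2 ^ n) * (r - 1)" using r1 by (simp add: mult_right_mono)
  moreover have "B < real n * (r - 1)" using n r1 by (simp add: pos_divide_less_eq)
  ultimately show False using b[of n] by linarith
qed

lemma abound:
  fixes A S R :: "'a::real_inner \<Rightarrow> 'a"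
  assumes bA: "bounded_linear A" and sym: "\<And>x y. A x \<bullet> y = x \<bullet> A y"
    and pos: "\<And>x. A x \<bullet> x \<ge> 0"
    and bS: "bounded_linear S" and bR: "bounded_linear R"
    and adj: "\<And>x y. A (R x) \<bullet> y = A x \<bullet> S y"
  shows "\<exists>c. \<forall>z. A z \<bullet> z = 1 \<longrightarrow> A (S z) \<bullet> S z \<le> c"
proof -
  define C where "C = (\<lambda>x. R (S x))"
  have bC: "bounded_linear C" unfolding C_def
    using bounded_linear_compose[OF bR bS] by (simp add: o_def)
  have linA: "linear A" using bA bounded_linear.linear by blast
  have pC: "A (C x) \<bullet> y = A (S x) \<bullet> S y" for x y unfolding C_def by (rule adj)
  have Csym: "A (C x) \<bullet> y = A x \<bullet> C y" for x y
  proof -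
    have "A (C x) \<bullet> y = A (S x) \<bullet> S y" by (rule pC)
    also have "\<dots> = A (S y) \<bullet> S x" by (metis sym inner_commute)
    also have "\<dots> = A (C y) \<bullet> x" by (simp add: pC)
    also have "\<dots> = A x \<bullet> C y" by (metis sym inner_commute)
    finally show ?thesis .
  qed
  have Cpow: "A ((C ^^ k) x) \<bullet> y = A x \<bullet> (C ^^ k) y" for k x y
  proof (induction k arbitrary: x y)
    case 0 then show ?case by simp
  next
    case (Suc k)
    have "A ((C ^^ Suc k) x) \<bullet> y = A (C ((C ^^ k) x)) \<bullet> y" by simp
    also have "\<dots> = A ((C ^^ k) x) \<bullet> C y" by (rule Csym)
    also have "\<dots> = A x \<bullet> (C ^^ k) (C y)" by (rule Suc)
    also have "\<dots> = A x \<bullet> (C ^^ Suc k) y" by (simp add: funpow_swap1)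
    finally show ?case .
  qed
  obtain KC where KC: "KC > 0" "\<And>x. norm (C x) \<le> norm x * KC"
    using bounded_linear.pos_bounded[OF bC] by blast
  obtain KA where KA: "KA > 0" "\<And>x. norm (A x) \<le> norm x * KA"
    using bounded_linear.pos_bounded[OF bA] by blast
  have Ck: "norm ((C ^^ k) x) \<le> KC ^ k * norm x" for k x
  proof (induction k)
    case 0 then show ?case by simp
  next
    case (Suc k)
    have "norm ((C ^^ Suc k) x) \<le> norm ((C ^^ k) x) * KC" using KC(2) by simp
    also have "\<dots> \<le> KC ^ k * norm x * KC" using Suc KC(1) by (simp add: mult_right_mono)
    finally show ?case by (simp add: algebra_simps)
  qed
  have qb: "A w \<bullet> w \<le> KA * (norm w)\<^sup>2" for w
  proof -
    have "A w \<bullet> w \<le> norm (A w) * norm w" by (rule norm_cauchy_schwarz)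
    also have "\<dots> \<le> norm w * KA * norm w" using KA(2) by (simp add: mult_right_mono)
    finally show ?thesis by (simp add: power2_eq_square algebra_simps)
  qed
  show ?thesis
  proof (intro exI allI impI)
    fix z assume z1: "A z \<bullet> z = 1"
    define a where "a = (\<lambda>n::nat. A ((C ^^ (2 ^ n)) z) \<bullet> (C ^^ (2 ^ n)) z)"
    have step: "(A ((C ^^ m) z) \<bullet> (C ^^ m) z)\<^sup>2 \<le> A ((C ^^ (2 * m)) z) \<bullet> (C ^^ (2 * m)) z" for m
    proof -
      have "A ((C ^^ m) z) \<bullet> (C ^^ m) z = A ((C ^^ m) ((C ^^ m) z)) \<bullet> z"
        using Cpow[of m "(C ^^ m) z" z] by simp
      also have "(C ^^ m) ((C ^^ m) z) = (C ^^ (2 * m)) z"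
        by (simp add: mult_2 funpow_add)
      finally have e: "A ((C ^^ m) z) \<bullet> (C ^^ m) z = A ((C ^^ (2 * m)) z) \<bullet> z" .
      show ?thesis unfolding e using cs_form[OF linA sym pos, of "(C ^^ (2 * m)) z" z] z1 by simp
    qed
    have a0: "a 0 = A (C z) \<bullet> C z" by (simp add: a_def)
    have an: "(a 0) ^ (2 ^ n) \<le> a n" for n
    proof (induction n)
      case 0 then show ?case by simp
    next
      case (Suc n)
      have nn: "0 \<le> a 0 ^ 2 ^ n" using pos a0 by simp
      have "(a 0) ^ (2 ^ Suc n) = ((a 0) ^ (2 ^ n))\<^sup>2" by (simp add: power_mult[symmetric] mult.commute)
      also have "\<dots> \<le> (a n)\<^sup>2" using Suc nn by (simp add: power_mono)
      also have "\<dots> \<le> a (Suc n)" using step[of "2 ^ n"] by (simp add: a_def)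
      finally show ?case .
    qed
    have aub: "a n \<le> KA * (norm z)\<^sup>2 * (KC\<^sup>2) ^ (2 ^ n)" for n
    proof -
      have "a n \<le> KA * (norm ((C ^^ (2 ^ n)) z))\<^sup>2" unfolding a_def by (rule qb)
      also have "\<dots> \<le> KA * (KC ^ (2 ^ n) * norm z)\<^sup>2"
        using Ck KA(1) by (intro mult_left_mono power_mono) auto
      also have "\<dots> = KA * (norm z)\<^sup>2 * (KC\<^sup>2) ^ (2 ^ n)"
        by (simp add: power_mult_distrib power_mult[symmetric] mult.commute mult.left_commute)
      finally show ?thesis .
    qed
    have "(a 0 / KC\<^sup>2) ^ (2 ^ n) \<le> KA * (norm z)\<^sup>2" for n
    proof -
      have "(a 0 / KC\<^sup>2) ^ (2 ^ n) = (a 0) ^ (2 ^ n) / (KC\<^sup>2) ^ (2 ^ n)" by (simp add: power_divide)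
      also have "\<dots> \<le> KA * (norm z)\<^sup>2"
        using an[of n] aub[of n] KC(1) by (simp add: divide_le_eq)
      finally show ?thesis .
    qed
    then have "a 0 / KC\<^sup>2 \<le> 1"
      by (rule pow2_bounded_le1[rotated]) (use pos a0 in simp)
    then have a0le: "a 0 \<le> KC\<^sup>2" using KC(1) by (simp add: divide_le_eq)
    have "(A (C z) \<bullet> z)\<^sup>2 \<le> a 0" using cs_form[OF linA sym pos, of "C z" z] z1 a0 by simp
    then have "(A (C z) \<bullet> z)\<^sup>2 \<le> KC\<^sup>2" using a0le by linarith
    then have "A (C z) \<bullet> z \<le> KC" using KC(1) by (metis abs_le_D1 abs_of_pos abs_le_square_iff)
    then show "A (S z) \<bullet> S z \<le> KC" using pC[of z z] by simp
  qed
qed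

lemma Re_cinner[simp]: "Re (cinner J x y) = x \<bullet> y" by (simp add: cinner_def)
lemma Im_cinner[simp]: "Im (cinner J x y) = x \<bullet> J y" by (simp add: cinner_def)
lemma cinner_eq0: "cinner J x y = 0 \<longleftrightarrow> x \<bullet> y = 0 \<and> x \<bullet> J y = 0"
  by (simp add: complex_eq_iff)

lemma mp_inv_range:
  fixes A J :: "'a::{real_inner,complete_space} \<Rightarrow> 'a"
  assumes bA: "bounded_linear A" and AJ: "\<And>x. A (J x) = J (A x)" and lJ: "linear J"
  shows "A (mp_inv J A (A v)) = A v"
proof -
  interpret A: bounded_linear A by fact
  interpret J: linear J by fact
  have sub: "subspace {x. A x = 0}"
    by (simp add: subspace_def A.add A.scaleR)
  have cl: "closed {x. A x = 0}"
    by (intro closed_Collect_eq continuous_intros continuous_on_id) (auto intro: A.continuous_on)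
  obtain m where m: "A m = 0" "\<forall>y. A y = 0 \<longrightarrow> (v - m) \<bullet> y = 0"
    using proj_exists[OF sub cl, of v] by auto
  define x0 where "x0 = v - m"
  have Ax0: "A x0 = A v" using m by (simp add: x0_def A.diff)
  define P where "P = (\<lambda>x. (\<forall>z. A z = 0 \<longrightarrow> cinner J x z = 0)
                        \<and> (\<forall>z. cinner J (A v - A x) (A z) = 0))"
  have Px0: "P x0"
    unfolding P_def
  proof (intro conjI allI impI)
    fix z assume z: "A z = 0"
    then have "A (J z) = 0" using AJ J.zero by simp
    then show "cinner J x0 z = 0" using z m(2) by (simp add: cinner_eq0 x0_def)
  next
    fix z show "cinner J (A v - A x0) (A z) = 0" using Ax0 by (simp add: cinner_eq0)
  qed
  have uniq: "x = x0" if "P x" for x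
  proof -
    have "(A v - A x) \<bullet> A z = 0" for z using that unfolding P_def
      by (metis Re_cinner zero_complex.sel(1))
    then have "(A v - A x) \<bullet> A (x0 - x) = 0" by blast
    then have "A (x0 - x) \<bullet> A (x0 - x) = 0" using Ax0 by (simp add: A.diff)
    then have N: "A (x0 - x) = 0" by simp
    have "x \<bullet> (x0 - x) = 0" using that N unfolding P_def cinner_eq0 by blast
    moreover have "x0 \<bullet> (x0 - x) = 0" using Px0 N unfolding P_def cinner_eq0 by blast
    ultimately have "(x0 - x) \<bullet> (x0 - x) = 0" by (simp add: inner_diff_left)
    then show ?thesis by simp
  qed
  have "mp_inv J A (A v) = (THE x. P x)" unfolding mp_inv_def P_def by simp
  also have "(THE x. P x) = x0"
  proof (rule the_equality)
    show "P x0" by (rule Px0)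
  next
    fix x assume "P x" then show "x = x0" by (rule uniq)
  qed
  finally show ?thesis using Ax0 by simp
qed

lemma sup_bdd_ge:
  fixes f :: "'b \<Rightarrow> real"
  assumes "\<And>z. z \<in> Z \<Longrightarrow> f z \<le> c" "z \<in> Z"
  shows "f z \<le> Sup (insert 0 (f ` Z))" and "0 \<le> Sup (insert 0 (f ` Z))"
proof -
  have b: "bdd_above (insert 0 (f ` Z))" using assms(1)
    by (intro bdd_aboveI[of _ "max 0 c"]) force
  show "f z \<le> Sup (insert 0 (f ` Z))" using assms(2) by (intro cSup_upper b) auto
  show "0 \<le> Sup (insert 0 (f ` Z))" by (intro cSup_upper b) auto
qed

lemma sup_nonneg:
  fixes f :: "'b \<Rightarrow> real"
  assumes "\<And>z. z \<in> Z \<Longrightarrow> f z \<le> c"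
  shows "0 \<le> Sup (insert 0 (f ` Z))"
proof -
  have b: "bdd_above (insert 0 (f ` Z))" using assms(1)
    by (intro bdd_aboveI[of _ "max 0 c"]) force
  show ?thesis by (intro cSup_upper b) auto
qed

lemma sup_sq_le:
  fixes f :: "'b \<Rightarrow> real"
  assumes "\<And>z. z \<in> Z \<Longrightarrow> 0 \<le> f z \<and> f z \<le> Q" "0 \<le> Q"
  shows "(Sup (insert 0 (f ` Z)))\<^sup>2 \<le> Q\<^sup>2"
proof -
  have le: "Sup (insert 0 (f ` Z)) \<le> Q" using assms by (intro cSup_least) auto
  have b: "bdd_above (insert 0 (f ` Z))" using assms(1)
    by (intro bdd_aboveI[of _ "Q"]) (use assms(2) in force)
  have "0 \<le> Sup (insert 0 (f ` Z))" by (intro cSup_upper b) auto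
  then show ?thesis using le by (simp add: power_mono)
qed

lemma sqrt4: "0 \<le> (x::real) \<Longrightarrow> sqrt x ^ 4 = x\<^sup>2"
proof -
  assume x: "0 \<le> x"
  have "sqrt x ^ 4 = (sqrt x ^ 2) ^ 2" by (simp add: power_mult[symmetric])
  then show ?thesis using x by simp
qed

theorem theorem2p15:
  fixes J A S :: "'a::{real_inner, complete_space} \<Rightarrow> 'a"
  assumes "complex_structure J"
    and "cpositive J A"
    and "S \<in> BA J A"
  shows "(domegaA J A S)\<^sup>2 + 2 * (opnormA J A S)\<^sup>2 * opnormA J A (ReA J A S)
         \<ge> max ((omegaA J A (\<lambda>z. S z + sharpA J A S (S z)))\<^sup>2)
                ((omegaA J A (\<lambda>z. S z - sharpA J A S (S z)))\<^sup>2)"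
proof -
  have bJ: "bounded_linear J" and JJ: "\<And>x. J (J x) = - x" and Jo: "\<And>x y. J x \<bullet> J y = x \<bullet> y"
    using assms(1) unfolding complex_structure_def by auto
  have bA: "bounded_linear A" and AJ: "\<And>x. A (J x) = J (A x)"
    and imA: "\<And>x. A x \<bullet> J x = 0" and posA: "\<And>x. A x \<bullet> x \<ge> 0"
    using assms(2) unfolding cpositive_def cbounded_def by auto
  have bS: "bounded_linear S" and SJ: "\<And>x. S (J x) = J (S x)"
    using assms(3) unfolding BA_def cbounded_def by auto
  obtain R where bR: "bounded_linear R" and AR: "\<And>x. A (R x) = cadj J S (A x)"
    using assms(3) unfolding BA_def cbounded_def by auto
  interpret A: bounded_linear A by fact
  interpret J: bounded_linear J by fact
  interpret S: bounded_linear S by fact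
  have J1: "J x \<bullet> y = - (x \<bullet> J y)" for x y
  proof -
    have "J x \<bullet> y = J x \<bullet> (- J (J y))" using JJ by simp
    also have "\<dots> = - (x \<bullet> J y)" using Jo by simp
    finally show ?thesis .
  qed
  have symA: "A x \<bullet> y = x \<bullet> A y" for x y
  proof -
    have "A (x + J y) \<bullet> J (x + J y) = 0" by (rule imA)
    then have "A x \<bullet> J (J y) + A (J y) \<bullet> J x = 0"
      using imA[of x] imA[of "J y"] by (simp add: A.add J.add inner_add)
    then have "- (A x \<bullet> y) + J (A y) \<bullet> J x = 0" using JJ AJ by simp
    then show ?thesis using Jo by (simp add: inner_commute)
  qed
  have "\<forall>y. \<exists>z. \<forall>x. S x \<bullet> y = x \<bullet> z" using adj_exists[OF bS] by blast
  then obtain St where St: "\<And>x y. S x \<bullet> y = x \<bullet> St y" by metis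
  have cadj: "cadj J S y = St y" for y
    unfolding cadj_def
  proof (rule the_equality)
    show "\<forall>x. cinner J (S x) y = cinner J x (St y)"
    proof
      fix x
      have "x \<bullet> J (St y) = - (J x \<bullet> St y)" using J1[of x "St y"] by simp
      also have "\<dots> = - (S (J x) \<bullet> y)" using St by simp
      also have "\<dots> = S x \<bullet> J y" using SJ J1 by simp
      finally show "cinner J (S x) y = cinner J x (St y)"
        by (simp add: complex_eq_iff St)
    qed
  next
    fix z assume h: "\<forall>x. cinner J (S x) y = cinner J x z"
    have "x \<bullet> z = x \<bullet> St y" for x using h St by (metis Re_cinner)
    then have "(z - St y) \<bullet> (z - St y) = 0" by (simp add: inner_diff)
    then show "z = St y" by simp
  qed
  have ARS: "A (R x) = St (A x)" for x using AR cadj by simp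
  have Ash: "A (sharpA J A S z) = St (A z)" for z
    unfolding sharpA_def
    using mp_inv_range[OF bA AJ J.linear, of "R z"] ARS cadj by simp
  have psh: "A (sharpA J A S w) \<bullet> v = A w \<bullet> S v" for w v
    using Ash St by (simp add: inner_commute)
  have adjRS: "A (R x) \<bullet> y = A x \<bullet> S y" for x y
    using ARS St by (simp add: inner_commute)
  have adjSR: "A (S x) \<bullet> y = A x \<bullet> R y" for x y
    using adjRS symA by (metis inner_commute)
  obtain cS where cS: "\<And>z. A z \<bullet> z = 1 \<Longrightarrow> A (S z) \<bullet> S z \<le> cS"
    using abound[OF bA symA posA bS bR adjRS] by blast
  obtain cR where cR: "\<And>z. A z \<bullet> z = 1 \<Longrightarrow> A (R z) \<bullet> R z \<le> cR"
    using abound[OF bA symA posA bR bS adjSR] by blast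
  have qsh: "A (sharpA J A S z) \<bullet> sharpA J A S z = A (R z) \<bullet> R z" for z
  proof -
    have e: "A (sharpA J A S z) = A (R z)" using Ash ARS by simp
    have "A (sharpA J A S z) \<bullet> sharpA J A S z = R z \<bullet> A (sharpA J A S z)"
      by (simp add: e symA inner_commute)
    also have "\<dots> = A (R z) \<bullet> R z" by (simp add: e inner_commute)
    finally show ?thesis .
  qed
  have qpar: "A (u + v) \<bullet> (u + v) \<le> 2 * (A u \<bullet> u) + 2 * (A v \<bullet> v)" for u v
  proof -
    have "0 \<le> A (u - v) \<bullet> (u - v)" by (rule posA)
    then show ?thesis using symA[of u v] symA[of v u]
      by (simp add: A.add A.diff inner_add inner_diff inner_commute)
  qed
  have qJ: "A (J z) \<bullet> J z = A z \<bullet> z" for z using AJ Jo by simp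
  define U where "U = {z. anorm J A z = 1}"
  have anorm_eq: "anorm J A z = sqrt (A z \<bullet> z)" for z
    by (simp add: anorm_def ainner_def)
  have U1: "A z \<bullet> z = 1" if "z \<in> U" for z
    using that posA[of z] by (simp add: U_def anorm_eq)
  have bdS: "anorm J A (S z) \<le> sqrt cS" if "z \<in> U" for z
    using cS[OF U1[OF that]] by (simp add: anorm_eq)
  have bdRe: "anorm J A (ReA J A S z) \<le> sqrt (cS + cR)" if "z \<in> U" for z
  proof -
    have "A (ReA J A S z) \<bullet> ReA J A S z
        = (1/4) * (A (S z + sharpA J A S z) \<bullet> (S z + sharpA J A S z))"
      by (simp add: ReA_def A.scaleR)
    also have "\<dots> \<le> (1/4) * (2 * (A (S z) \<bullet> S z) + 2 * (A (sharpA J A S z) \<bullet> sharpA J A S z))"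
      using qpar by simp
    also have "\<dots> \<le> cS + cR" using cS[OF U1[OF that]] cR[OF U1[OF that]] qsh[of z]
      posA[of "S z"] posA[of "R z"] by simp
    finally show ?thesis by (simp add: anorm_eq)
  qed
  have csz: "(A (S z) \<bullet> w)\<^sup>2 \<le> (A (S z) \<bullet> S z) * (A w \<bullet> w)" for z w
    using cs_form[OF A.linear symA posA] by blast
  have ainS: "ainner J A (S z) z = Complex (A (S z) \<bullet> z) (A (S z) \<bullet> J z)" for z
    by (simp add: ainner_def cinner_def)
  have bdD: "sqrt ((cmod (ainner J A (S z) z))\<^sup>2 + (anorm J A (S z))^4) \<le> sqrt (2 * cS + cS\<^sup>2)"
    if "z \<in> U" for z
  proof -
    have q1: "A z \<bullet> z = 1" by (rule U1[OF that])
    have b0: "0 \<le> A (S z) \<bullet> S z" by (rule posA)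
    have "(cmod (ainner J A (S z) z))\<^sup>2 = (A (S z) \<bullet> z)\<^sup>2 + (A (S z) \<bullet> J z)\<^sup>2"
      by (simp add: ainS cmod_def)
    also have "\<dots> \<le> 2 * cS" using csz[of z z] csz[of z "J z"] qJ[of z] q1 cS[OF q1] by simp
    finally have 1: "(cmod (ainner J A (S z) z))\<^sup>2 \<le> 2 * cS" .
    have "(anorm J A (S z))^4 = (A (S z) \<bullet> S z)\<^sup>2"
      using b0 by (simp add: anorm_eq sqrt4)
    also have "\<dots> \<le> cS\<^sup>2" using b0 cS[OF q1] by (simp add: power_mono)
    finally show ?thesis using 1 by simp
  qed
  define D where "D = domegaA J A S"
  define NS where "NS = opnormA J A S"
  define NR where "NR = opnormA J A (ReA J A S)"
  have Dge: "sqrt ((cmod (ainner J A (S z) z))\<^sup>2 + (anorm J A (S z))^4) \<le> D" if "z \<in> U" for z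
    unfolding D_def domegaA_def U_def[symmetric] using bdD that by (rule sup_bdd_ge(1))
  have NSge: "anorm J A (S z) \<le> NS" if "z \<in> U" for z
    unfolding NS_def opnormA_def U_def[symmetric] using bdS that by (rule sup_bdd_ge(1))
  have NRge: "anorm J A (ReA J A S z) \<le> NR" if "z \<in> U" for z
    unfolding NR_def opnormA_def U_def[symmetric] using bdRe that by (rule sup_bdd_ge(1))
  have D0: "0 \<le> D"
    unfolding D_def domegaA_def U_def[symmetric] using bdD by (rule sup_nonneg)
  have NS0: "0 \<le> NS"
    unfolding NS_def opnormA_def U_def[symmetric] using bdS by (rule sup_nonneg)
  have NR0: "0 \<le> NR"
    unfolding NR_def opnormA_def U_def[symmetric] using bdRe by (rule sup_nonneg)
  define Q where "Q = sqrt (D\<^sup>2 + 2 * NS\<^sup>2 * NR)"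
  have Q0: "0 \<le> Q" using D0 NS0 NR0 by (simp add: Q_def)
  have QQ: "Q\<^sup>2 = D\<^sup>2 + 2 * NS\<^sup>2 * NR" using D0 NS0 NR0 by (simp add: Q_def)
  have elem: "cmod (ainner J A (S z + s *\<^sub>R sharpA J A S (S z)) z) \<le> Q"
    if "z \<in> U" "\<bar>s\<bar> = 1" for z s
  proof -
    have q1: "A z \<bullet> z = 1" by (rule U1[OF that(1)])
    define \<alpha> where "\<alpha> = A (S z) \<bullet> z"
    define \<beta> where "\<beta> = A (S z) \<bullet> J z"
    define b where "b = A (S z) \<bullet> S z"
    have b0: "0 \<le> b" using posA by (simp add: b_def)
    have e1: "A (sharpA J A S (S z)) \<bullet> z = b" using psh by (simp add: b_def)
    have e2: "A (sharpA J A S (S z)) \<bullet> J z = 0" using psh[of "S z" "J z"] SJ imA by simp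
    have ain: "ainner J A (S z + s *\<^sub>R sharpA J A S (S z)) z = Complex (\<alpha> + s * b) \<beta>"
      by (simp add: ainner_def cinner_def A.add A.scaleR inner_add e1 e2 \<alpha>_def \<beta>_def)
    have "(cmod (Complex (\<alpha> + s * b) \<beta>))\<^sup>2 = (\<alpha> + s * b)\<^sup>2 + \<beta>\<^sup>2" by (simp add: cmod_def)
    also have "\<dots> = (\<alpha>\<^sup>2 + \<beta>\<^sup>2 + b\<^sup>2) + 2 * s * \<alpha> * b"
      using that(2) by (simp add: power2_eq_square algebra_simps abs_if split: if_splits)
    also have "\<dots> \<le> D\<^sup>2 + 2 * NS\<^sup>2 * NR"
    proof -
      have d: "sqrt (\<alpha>\<^sup>2 + \<beta>\<^sup>2 + b\<^sup>2) \<le> D"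
        using Dge[OF that(1)] b0 by (simp add: ainS cmod_def anorm_eq \<alpha>_def \<beta>_def b_def sqrt4)
      then have d2: "\<alpha>\<^sup>2 + \<beta>\<^sup>2 + b\<^sup>2 \<le> D\<^sup>2"
        by (metis add_nonneg_nonneg real_sqrt_le_iff real_sqrt_pow2 zero_le_power2 D0 power_mono
            real_sqrt_ge_zero)
      have bns: "b \<le> NS\<^sup>2"
      proof -
        have "sqrt b \<le> NS" using NSge[OF that(1)] by (simp add: anorm_eq b_def)
        then show ?thesis using b0 by (metis real_sqrt_le_iff real_sqrt_pow2 NS0 power_mono real_sqrt_ge_zero)
      qed
      have aRe: "\<alpha> = A (ReA J A S z) \<bullet> z"
      proof -
        have "A (sharpA J A S z) \<bullet> z = A z \<bullet> S z" by (rule psh)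
        also have "\<dots> = \<alpha>" by (simp add: \<alpha>_def symA inner_commute)
        finally show ?thesis by (simp add: ReA_def A.scaleR A.add inner_add \<alpha>_def)
      qed
      have "\<alpha>\<^sup>2 \<le> A (ReA J A S z) \<bullet> ReA J A S z"
        using cs_form[OF A.linear symA posA, of "ReA J A S z" z] q1 aRe by simp
      then have "\<bar>\<alpha>\<bar> \<le> sqrt (A (ReA J A S z) \<bullet> ReA J A S z)" by (simp add: real_le_rsqrt)
      then have an: "\<bar>\<alpha>\<bar> \<le> NR" using NRge[OF that(1)] by (simp add: anorm_eq)
      have sa: "s * \<alpha> \<le> \<bar>\<alpha>\<bar>"
        using abs_ge_self[of "s * \<alpha>"] that(2) by (simp add: abs_mult)
      have "2 * s * \<alpha> * b \<le> 2 * \<bar>\<alpha>\<bar> * b" using mult_right_mono[OF sa b0] by simp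
      also have "\<dots> \<le> 2 * NR * NS\<^sup>2" using an bns b0 NR0
        by (intro mult_mono mult_left_mono) auto
      finally show ?thesis using d2 by (simp add: algebra_simps)
    qed
    finally have "(cmod (Complex (\<alpha> + s * b) \<beta>))\<^sup>2 \<le> Q\<^sup>2" using QQ by simp
    then show ?thesis using ain Q0 by (metis abs_le_square_iff abs_of_nonneg norm_ge_zero)
  qed
  have om: "(omegaA J A (\<lambda>z. S z + s *\<^sub>R sharpA J A S (S z)))\<^sup>2 \<le> Q\<^sup>2" if "\<bar>s\<bar> = 1" for s
    unfolding omegaA_def U_def[symmetric]
    by (rule sup_sq_le) (use elem that Q0 in auto)
  have "(omegaA J A (\<lambda>z. S z + sharpA J A S (S z)))\<^sup>2 \<le> Q\<^sup>2" using om[of 1] by simp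
  moreover have "(omegaA J A (\<lambda>z. S z - sharpA J A S (S z)))\<^sup>2 \<le> Q\<^sup>2" using om[of "-1"] by simp
  ultimately show ?thesis using QQ by (simp add: D_def NS_def NR_def)
qed

end
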